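(* Let $\ell\in\{1,\dots,L\}$, assume the channel growth condition and the asymptotic quadratic-Lipschitz condition on $\mathcal G^{(\ell)}$, let $Z_k$ be i.i.d. $\mathcal N(\mathbf 0,\mathbf I_{D_\ell})$ and let $S\subset\mathcal S^+_{D_\ell}$ be compact. Then for every $\epsilon>0$ there is $R<\infty$ such that, for all sufficiently large $n$, $$\sup_{Q\in S}\mathbb P\Big(\Big\|\frac1{C_\ell(n)}\sum_{k=1}^{C_\ell(n)}\mathcal G^{(\ell)}(\sqrt QZ_k)\Big\|_F>R\Big)\le e^{-n\epsilon}.$$
   Context: $\mathcal S^+_D$ denotes the symmetric positive semidefinite $D\times D$ real matrices, $\sqrt Q$ the positive semidefinite square root, $\|\cdot\|_2$ the Euclidean norm and $\|\cdot\|_F$ the Frobenius norm. $\mathcal G^{(\ell)}:\mathbb R^{D_\ell}\to\mathcal S^+_{D_{\ell+1}}$ is a map and $C_\ell(n)$ are positive integers. Channel growth condition: $C_\ell(n)/n\to\alpha_\ell\in(0,\infty)$. Asymptotic quadratic-Lipschitz condition: $\mathcal G^{(\ell)}$ is continuous and for every $\varepsilon>0$ there is $C_\varepsilon>0$ such that for all $z,z'\in\mathbb R^{D_\ell}$, $\|\mathcal G^{(\ell)}(z)-\mathcal G^{(\ell)}(z')\|_F\le C_\varepsilon[1+\|z-z'\|_2(\|z\|_2+\|z'\|_2)]+\varepsilon(\|z\|_2^2+\|z'\|_2^2)$. *)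

theory Defs
  imports "HOL-Probability.Probability"
begin

definition psd :: "real^'n^'n \<Rightarrow> bool" where
  "psd Q \<longleftrightarrow> transpose Q = Q \<and> (\<forall>x. 0 \<le> x \<bullet> (Q *v x))"

definition psd_sqrt :: "real^'n^'n \<Rightarrow> real^'n^'n" where
  "psd_sqrt Q = (THE B. psd B \<and> B ** B = Q)"

definition std_gauss :: "(real^'n) measure" where
  "std_gauss = density lborel (\<lambda>z. ennreal (\<Prod>i\<in>UNIV. std_normal_density (z $ i)))"

definition iid_gauss :: "nat \<Rightarrow> (nat \<Rightarrow> real^'n) measure" where
  "iid_gauss c = PiM {..<c} (\<lambda>_. std_gauss)"

end

theory Submission
  imports Defs
begin

lemma scaleR_mv: "((c::real) *\<^sub>R (M::real^'n^'m)) *v x = c *\<^sub>R (M *v x)"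
  by (simp add: vec_eq_iff matrix_vector_mult_def sum_distrib_left algebra_simps)

lemma sym_inner:
  fixes A :: "real^'n^'n"
  assumes "transpose A = A"
  shows "x \<bullet> (A *v y) = (A *v x) \<bullet> y"
proof -
  have "x \<bullet> (A *v y) = (x v* A) \<bullet> y" by (simp add: dot_lmul_matrix)
  also have "x v* A = A *v x" by (metis assms vector_transpose_matrix)
  finally show ?thesis .
qed

lemma psd_zero:
  fixes B :: "real^'n^'n"
  assumes "transpose B = B" and nn: "\<forall>x\<in>V. 0 \<le> x \<bullet> (B *v x)" and V: "subspace V"
    and u: "u \<in> V" and z: "u \<bullet> (B *v u) = 0" and w: "w \<in> V"
  shows "w \<bullet> (B *v u) = 0"
proof (rule ccontr)
  assume ne: "w \<bullet> (B *v u) \<noteq> 0"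
  define a where "a = w \<bullet> (B *v u)"
  define b where "b = w \<bullet> (B *v w)"
  have b: "b \<ge> 0" using nn w b_def by auto
  have key: "0 \<le> 2 * t * a + t^2 * b" for t
  proof -
    have "u + t *\<^sub>R w \<in> V" using V u w by (simp add: subspace_add subspace_mul)
    then have "0 \<le> (u + t *\<^sub>R w) \<bullet> (B *v (u + t *\<^sub>R w))" using nn by blast
    also have "\<dots> = u \<bullet> (B *v u) + t * (u \<bullet> (B *v w)) + t * (w \<bullet> (B *v u)) + t^2 * b"
      by (simp add: matrix_vector_right_distrib matrix_vector_mult_scaleR inner_add_left inner_add_right
          b_def power2_eq_square algebra_simps)
    also have "u \<bullet> (B *v w) = w \<bullet> (B *v u)"
      using sym_inner[OF assms(1), of u w] by (simp add: inner_commute)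
    finally show ?thesis using z a_def by (simp add: algebra_simps)
  qed
  define t where "t = - a / (b + 1)"
  have b1: "b + 1 > 0" using b by simp
  have e: "(b+1)^2 * (2 * t * a + t^2 * b) = - (a^2 * (b+2))"
  proof -
    have ts: "t * (b+1) = - a" using b1 by (simp add: t_def)
    have "(b+1)^2 * (2 * t * a + t^2 * b) = 2*a*(b+1)*(t*(b+1)) + (t*(b+1))^2*b"
      by (simp add: power2_eq_square algebra_simps)
    also have "\<dots> = - (a^2 * (b+2))" unfolding ts by (simp add: power2_eq_square algebra_simps)
    finally show ?thesis .
  qed
  have "0 \<le> (b+1)^2 * (2 * t * a + t^2 * b)" using key[of t] by simp
  moreover have "a^2 * (b+2) > 0" using ne a_def b by simp
  ultimately show False using e by linarith
qed

lemma eig_basis_sub: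
  fixes A :: "real^'n^'n"
  assumes sym: "transpose A = A"
  shows "subspace V \<Longrightarrow> (\<forall>x\<in>V. A *v x \<in> V) \<Longrightarrow> \<exists>E. E \<subseteq> V \<and> finite E \<and> pairwise orthogonal E
     \<and> (\<forall>u\<in>E. norm u = 1 \<and> A *v u = (u \<bullet> (A *v u)) *\<^sub>R u) \<and> span E = V"
proof (induction "dim V" arbitrary: V rule: less_induct)
  case less
  note V = less.prems(1) and inv = less.prems(2)
  show ?case
  proof (cases "V = {0}")
    case True
    then show ?thesis by (intro exI[of _ "{}"]) auto
  next
    case False
    then obtain v where v: "v \<in> V" "v \<noteq> 0" using V subspace_0 by blast
    define K where "K = V \<inter> sphere 0 1"
    have cK: "compact K" unfolding K_def
      by (intro closed_Int_compact closed_subspace V compact_sphere)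
    have "(1 / norm v) *\<^sub>R v \<in> K" using v V by (simp add: K_def subspace_mul norm_divide)
    then have neK: "K \<noteq> {}" by blast
    have cf: "continuous_on K (\<lambda>x. x \<bullet> (A *v x))"
      by (intro continuous_intros linear_continuous_on matrix_vector_mul_bounded_linear)
    obtain u where uK: "u \<in> K" and umax: "\<And>y. y \<in> K \<Longrightarrow> y \<bullet> (A *v y) \<le> u \<bullet> (A *v u)"
      using continuous_attains_sup[OF cK neK cf] by blast
    define \<mu> where "\<mu> = u \<bullet> (A *v u)"
    have uV: "u \<in> V" and un: "norm u = 1" using uK by (auto simp: K_def)
    define B where "B = \<mu> *\<^sub>R mat 1 - A"
    have Bx: "B *v x = \<mu> *\<^sub>R x - A *v x" for x
      by (simp add: B_def matrix_vector_mult_diff_rdistrib scaleR_mv)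
    have symB: "transpose B = B" using sym by (simp add: B_def vec_eq_iff transpose_def mat_def)
    have nnB: "\<forall>x\<in>V. 0 \<le> x \<bullet> (B *v x)"
    proof
      fix x assume xV: "x \<in> V"
      show "0 \<le> x \<bullet> (B *v x)"
      proof (cases "x = 0")
        case True then show ?thesis by simp
      next
        case False
        define y where "y = (1 / norm x) *\<^sub>R x"
        have "y \<in> K" using xV False V by (simp add: y_def K_def subspace_mul norm_divide)
        then have "y \<bullet> (A *v y) \<le> \<mu>" using umax \<mu>_def by blast
        then have "(1/norm x)^2 * (x \<bullet> (A *v x)) \<le> \<mu>"
          by (simp add: y_def matrix_vector_mult_scaleR power2_eq_square)
        then have "x \<bullet> (A *v x) \<le> \<mu> * (norm x)^2" using False
          by (simp add: field_simps power2_eq_square)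
        then show ?thesis by (simp add: Bx inner_diff_right power2_norm_eq_inner)
      qed
    qed
    have Bu0: "u \<bullet> (B *v u) = 0" using un
      by (simp add: Bx inner_diff_right \<mu>_def power2_norm_eq_inner[symmetric])
    have BuV: "B *v u \<in> V" using uV inv V by (simp add: Bx subspace_diff subspace_mul)
    have "(B *v u) \<bullet> (B *v u) = 0" using psd_zero[OF symB nnB V uV Bu0 BuV] .
    then have "B *v u = 0" by simp
    then have Au: "A *v u = \<mu> *\<^sub>R u" by (simp add: Bx)
    define W where "W = {x \<in> V. u \<bullet> x = 0}"
    have Wsub: "subspace W" using V unfolding W_def subspace_def by (auto simp: inner_add_right)
    have Winv: "\<forall>x\<in>W. A *v x \<in> W"
    proof
      fix x assume "x \<in> W"
      then have "x \<in> V" "u \<bullet> x = 0" by (auto simp: W_def)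
      moreover have "u \<bullet> (A *v x) = (A *v u) \<bullet> x" by (rule sym_inner[OF sym])
      ultimately show "A *v x \<in> W" using inv by (simp add: W_def Au)
    qed
    have WV: "W \<subseteq> V" by (auto simp: W_def)
    have uW: "u \<notin> W" using un by (simp add: W_def power2_norm_eq_inner[symmetric])
    have "dim W < dim V"
    proof (rule dim_psubset)
      have sW: "span W = W" and sV: "span V = V" using Wsub V by (simp_all add: span_eq_iff)
      show "span W \<subset> span V" unfolding sW sV using WV uW uV by blast
    qed
    then obtain E where E: "E \<subseteq> W" "finite E" "pairwise orthogonal E"
       "\<forall>u\<in>E. norm u = 1 \<and> A *v u = (u \<bullet> (A *v u)) *\<^sub>R u" "span E = W"
      using less.hyps[OF _ Wsub Winv] by blast
    show ?thesis
    proof (intro exI[of _ "insert u E"] conjI)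
      show "insert u E \<subseteq> V" using E(1) WV uV by auto
      show "finite (insert u E)" using E by simp
      show "pairwise orthogonal (insert u E)" using E(1,3)
        by (auto simp: pairwise_insert W_def orthogonal_def inner_commute)
      show "\<forall>v\<in>insert u E. norm v = 1 \<and> A *v v = (v \<bullet> (A *v v)) *\<^sub>R v"
        using E(4) un Au \<mu>_def by auto
      show "span (insert u E) = V"
      proof
        show "span (insert u E) \<subseteq> V" using E(1) WV uV V by (simp add: span_minimal)
        show "V \<subseteq> span (insert u E)"
        proof
          fix x assume xV: "x \<in> V"
          define r where "r = x - (u \<bullet> x) *\<^sub>R u"
          have "r \<in> W" using xV uV V un
            by (simp add: W_def r_def subspace_diff subspace_mul inner_diff_right
                power2_norm_eq_inner[symmetric])
          then have "r \<in> span (insert u E)" using E(5) span_mono[of E "insert u E"] by auto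
          moreover have "(u \<bullet> x) *\<^sub>R u \<in> span (insert u E)" by (simp add: span_base span_mul)
          ultimately have "r + (u \<bullet> x) *\<^sub>R u \<in> span (insert u E)" by (rule span_add)
          then show "x \<in> span (insert u E)" by (simp add: r_def)
        qed
      qed
    qed
  qed
qed

lemma eig_basis:
  fixes A :: "real^'n^'n"
  assumes sym: "transpose A = A"
  shows "\<exists>E. finite E \<and> pairwise orthogonal E
     \<and> (\<forall>u\<in>E. norm u = 1 \<and> A *v u = (u \<bullet> (A *v u)) *\<^sub>R u) \<and> span E = UNIV"
  using eig_basis_sub[OF sym, of UNIV] by auto

lemma orth_delta:
  assumes "pairwise orthogonal E" "\<forall>u\<in>E. norm (u::'a::real_inner) = 1" "w \<in> E" "u \<in> E"
  shows "u \<bullet> w = (if u = w then 1 else 0)"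
  using assms by (auto simp: pairwise_def orthogonal_def power2_norm_eq_inner[symmetric])

lemma mv_eq_on_span:
  fixes M N :: "real^'n^'n"
  assumes "span E = UNIV" "\<And>w. w \<in> E \<Longrightarrow> M *v w = N *v w"
  shows "M = N"
  unfolding matrix_eq
proof
  fix x :: "real^'n"
  have "x \<in> span E" using assms by simp
  then show "M *v x = N *v x"
    by (rule real_vector.linear_eq_on[OF matrix_vector_mul_linear matrix_vector_mul_linear]) (use assms in auto)
qed

definition outer :: "real^'n \<Rightarrow> real^'n^'n" where
  "outer u = (\<chi> i j. u$i * u$j)"

lemma outer_mv: "outer u *v x = (u \<bullet> x) *\<^sub>R u"
  by (simp add: outer_def vec_eq_iff matrix_vector_mult_def inner_vec_def sum_distrib_left algebra_simps)

lemma sum_mv: "finite E \<Longrightarrow> (sum f E) *v x = (\<Sum>u\<in>E. f u *v x)"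
  by (induction E rule: finite_induct) (auto simp: matrix_vector_mult_add_rdistrib)

lemma psd_sqrt_exists:
  fixes Q :: "real^'n^'n"
  assumes "psd Q"
  shows "\<exists>B. psd B \<and> B ** B = Q"
proof -
  have sym: "transpose Q = Q" and nn: "\<And>x. 0 \<le> x \<bullet> (Q *v x)" using assms by (auto simp: psd_def)
  obtain E where E: "finite E" "pairwise orthogonal E" "\<forall>u\<in>E. norm u = 1"
    "\<forall>u\<in>E. Q *v u = (u \<bullet> (Q *v u)) *\<^sub>R u" "span E = UNIV"
    using eig_basis[OF sym] by blast
  define l where "l u = u \<bullet> (Q *v u)" for u
  define B where "B = (\<Sum>u\<in>E. sqrt (l u) *\<^sub>R outer u)"
  have Bx: "B *v x = (\<Sum>u\<in>E. (sqrt (l u) * (u \<bullet> x)) *\<^sub>R u)" for x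
    unfolding B_def by (simp add: sum_mv[OF E(1)] scaleR_mv outer_mv)
  have Bw: "B *v w = sqrt (l w) *\<^sub>R w" if w: "w \<in> E" for w
  proof -
    have "B *v w = (\<Sum>u\<in>E. (if u = w then sqrt (l u) *\<^sub>R u else 0))"
      unfolding Bx by (rule sum.cong) (use orth_delta[OF E(2) E(3) w] in auto)
    also have "\<dots> = sqrt (l w) *\<^sub>R w" using w E(1) by simp
    finally show ?thesis .
  qed
  have symB: "transpose B = B"
    unfolding B_def by (simp add: vec_eq_iff transpose_def outer_def mult.commute)
  have psdB: "psd B"
    unfolding psd_def
  proof (intro conjI allI symB)
    fix x
    have "x \<bullet> (B *v x) = (\<Sum>u\<in>E. sqrt (l u) * (u \<bullet> x)^2)"
      by (simp add: Bx inner_sum_right power2_eq_square inner_commute mult.assoc)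
    also have "\<dots> \<ge> 0" using nn l_def by (intro sum_nonneg) simp
    finally show "0 \<le> x \<bullet> (B *v x)" .
  qed
  have "B ** B = Q"
  proof (rule mv_eq_on_span[OF E(5)])
    fix w assume w: "w \<in> E"
    have "(B ** B) *v w = B *v (B *v w)" by (simp add: matrix_vector_mul_assoc)
    also have "\<dots> = (sqrt (l w) * sqrt (l w)) *\<^sub>R w" using w by (simp add: Bw matrix_vector_mult_scaleR)
    also have "\<dots> = l w *\<^sub>R w" using nn l_def by simp
    also have "\<dots> = Q *v w" using E(4) w l_def by simp
    finally show "(B ** B) *v w = Q *v w" .
  qed
  then show ?thesis using psdB by blast
qed

lemma psd_sqrt_unique:
  fixes B C :: "real^'n^'n"
  assumes B: "psd B" and C: "psd C" and eq: "B ** B = C ** C"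
  shows "B = C"
proof -
  have sB: "transpose B = B" and nB: "\<And>x. 0 \<le> x \<bullet> (B *v x)" using B by (auto simp: psd_def)
  have sC: "transpose C = C" and nC: "\<And>x. 0 \<le> x \<bullet> (C *v x)" using C by (auto simp: psd_def)
  define D where "D = B - C"
  have Dx: "D *v x = B *v x - C *v x" for x by (simp add: D_def matrix_vector_mult_diff_rdistrib)
  have sD: "transpose D = D" using sB sC by (simp add: D_def vec_eq_iff transpose_def)
  obtain E where E: "finite E" "pairwise orthogonal E" "\<forall>u\<in>E. norm u = 1"
    "\<forall>u\<in>E. D *v u = (u \<bullet> (D *v u)) *\<^sub>R u" "span E = UNIV"
    using eig_basis[OF sD] by blast
  have "D = 0"
  proof (rule mv_eq_on_span[OF E(5)])
    fix v assume v: "v \<in> E"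
    define \<mu> where "\<mu> = v \<bullet> (D *v v)"
    have Dv: "D *v v = \<mu> *\<^sub>R v" using E(4) v \<mu>_def by simp
    have vn: "v \<noteq> 0" using E(3) v by auto
    have "B *v (D *v v) + D *v (C *v v) = B *v (B *v v) - C *v (C *v v)"
      by (simp add: Dx matrix_vector_mult_diff_distrib)
    also have "\<dots> = 0" by (simp add: matrix_vector_mul_assoc eq)
    finally have z: "B *v (D *v v) + D *v (C *v v) = 0" .
    have "v \<bullet> (B *v (D *v v)) = \<mu> * (v \<bullet> (B *v v))" by (simp add: Dv matrix_vector_mult_scaleR)
    moreover have "v \<bullet> (D *v (C *v v)) = \<mu> * (v \<bullet> (C *v v))"
      using sym_inner[OF sD, of v "C *v v"] by (simp add: Dv inner_commute)
    moreover have "v \<bullet> (B *v (D *v v) + D *v (C *v v)) = 0" using z by simp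
    ultimately have m: "\<mu> * (v \<bullet> (B *v v) + v \<bullet> (C *v v)) = 0" by (simp add: inner_add_right algebra_simps)
    have "\<mu> = 0"
    proof (rule ccontr)
      assume "\<mu> \<noteq> 0"
      then have "v \<bullet> (B *v v) + v \<bullet> (C *v v) = 0" using m by simp
      then have b0: "v \<bullet> (B *v v) = 0" and c0: "v \<bullet> (C *v v) = 0" using nB[of v] nC[of v] by linarith+
      have "(B *v v) \<bullet> (B *v v) = 0"
        by (rule psd_zero[OF sB _ subspace_UNIV _ b0]) (use nB in auto)
      moreover have "(C *v v) \<bullet> (C *v v) = 0"
        by (rule psd_zero[OF sC _ subspace_UNIV _ c0]) (use nC in auto)
      ultimately have "D *v v = 0" by (simp add: Dx)
      then show False using Dv vn \<open>\<mu> \<noteq> 0\<close> by simp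
    qed
    then show "D *v v = 0 *v v" using Dv by simp
  qed
  then show ?thesis by (simp add: D_def)
qed

lemma psd_sqrt_props:
  fixes Q :: "real^'n^'n"
  assumes "psd Q"
  shows "psd (psd_sqrt Q) \<and> psd_sqrt Q ** psd_sqrt Q = Q"
proof -
  have "\<exists>!B. psd B \<and> B ** B = Q"
    using psd_sqrt_exists[OF assms] psd_sqrt_unique by metis
  then show ?thesis unfolding psd_sqrt_def by (rule theI')
qed


definition gg :: "real \<Rightarrow> real" where
  "gg x = exp (x^2/4) * std_normal_density x"

lemma gg_eq: "gg x = (sqrt (2*pi*(sqrt 2)^2) / sqrt (2*pi)) * normal_density 0 (sqrt 2) x"
proof -
  have e: "exp (x^2/4) * exp (-(x^2)/2) = exp (-(x - 0)\<^sup>2 / (2 * (sqrt 2)\<^sup>2))"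
    by (simp add: exp_add[symmetric])
  have "gg x = (1 / sqrt (2*pi)) * (exp (x^2/4) * exp (-(x^2)/2))"
    by (simp add: gg_def normal_density_def)
  also have "\<dots> = (sqrt (2*pi*(sqrt 2)^2) / sqrt (2*pi)) * normal_density 0 (sqrt 2) x"
    proof -
    have s2: "sqrt 2 > (0::real)" by simp
    show ?thesis unfolding e normal_density_def by (simp del: real_sqrt_mult)
  qed
  finally show ?thesis .
qed

lemma gg_int: "integrable lborel gg"
proof -
  have "gg = (\<lambda>x. (sqrt (2*pi*(sqrt 2)^2) / sqrt (2*pi)) * normal_density 0 (sqrt 2) x)"
    by (rule ext, rule gg_eq)
  moreover have "integrable lborel (\<lambda>x. (sqrt (2*pi*(sqrt 2)^2) / sqrt (2*pi)) * normal_density 0 (sqrt 2) x)"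
    by (rule integrable_mult_right, rule integrable_normal_density) simp
  ultimately show ?thesis by simp
qed

lemma sets_std_gauss[measurable_cong]: "sets (std_gauss :: (real^'n) measure) = sets borel"
  by (simp add: std_gauss_def)

lemma norm2_vec: "norm (z::real^'n) ^ 2 = (\<Sum>i\<in>UNIV. (z$i)^2)"
  by (simp only: power2_norm_eq_inner) (simp add: inner_vec_def power2_eq_square)

lemma Basis_vec_range: "(Basis :: (real^'n) set) = range (\<lambda>i. axis i 1)"
  by (auto simp: Basis_vec_def)

lemma prod_Basis_vec: "(\<Prod>b\<in>(Basis :: (real^'n) set). f (z \<bullet> b)) = (\<Prod>i\<in>UNIV. f (z $ i))"
proof -
  have inj: "inj (\<lambda>i::'n. axis i (1::real))" by (auto simp: inj_def axis_eq_axis)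
  show ?thesis unfolding Basis_vec_range prod.reindex[OF inj] by (simp add: inner_axis)
qed

lemma K_finite:
  "(\<integral>\<^sup>+ z. ennreal (exp (norm (z::real^'n) ^ 2 / 4)) \<partial>std_gauss) < \<top>"
proof -
  have "(\<integral>\<^sup>+ z. ennreal (exp (norm (z::real^'n) ^ 2 / 4)) \<partial>std_gauss)
      = (\<integral>\<^sup>+ z. ennreal (\<Prod>i\<in>UNIV. std_normal_density (z $ i)) * ennreal (exp (norm (z::real^'n) ^ 2 / 4)) \<partial>lborel)"
    unfolding std_gauss_def by (subst nn_integral_density) auto
  also have "\<dots> = (\<integral>\<^sup>+ z. (\<Prod>b\<in>(Basis :: (real^'n) set). ennreal (gg (z \<bullet> b))) \<partial>lborel)"
  proof (rule nn_integral_cong)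
    fix z :: "real^'n"
    have "ennreal (\<Prod>i\<in>UNIV. std_normal_density (z $ i)) * ennreal (exp (norm z ^ 2 / 4))
        = ennreal ((\<Prod>i\<in>UNIV. std_normal_density (z $ i)) * (\<Prod>i\<in>UNIV. exp ((z $ i)^2 / 4)))"
      by (simp add: ennreal_mult'[symmetric] prod_nonneg norm2_vec sum_divide_distrib exp_sum)
    also have "\<dots> = ennreal (\<Prod>i\<in>UNIV. gg (z $ i))"
      by (simp add: gg_def prod.distrib mult.commute)
    also have "\<dots> = (\<Prod>i\<in>UNIV. ennreal (gg (z $ i)))"
      by (simp add: prod_ennreal gg_def)
    also have "\<dots> = (\<Prod>b\<in>(Basis :: (real^'n) set). ennreal (gg (z \<bullet> b)))"
      by (rule prod_Basis_vec[symmetric])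
    finally show "ennreal (\<Prod>i\<in>UNIV. std_normal_density (z $ i)) * ennreal (exp (norm z ^ 2 / 4))
        = (\<Prod>b\<in>(Basis :: (real^'n) set). ennreal (gg (z \<bullet> b)))" .
  qed
  also have "\<dots> = (\<Prod>b\<in>(Basis :: (real^'n) set). (\<integral>\<^sup>+ x. ennreal (gg x) \<partial>lborel))"
    by (rule nn_integral_lborel_prod) (auto simp: gg_def)
  also have "\<dots> < \<top>"
  proof -
    have "(\<integral>\<^sup>+ x. ennreal (gg x) \<partial>lborel) < \<top>"
    proof -
      have "(\<integral>\<^sup>+ x. ennreal (gg x) \<partial>lborel) = (\<integral>\<^sup>+ x. ennreal (norm (gg x)) \<partial>lborel)"
        by (rule nn_integral_cong) (simp add: gg_def)
      also have "\<dots> < \<top>" using gg_int by (auto simp: integrable_iff_bounded)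
      finally show ?thesis .
    qed
    then show ?thesis by (simp add: power_less_top_ennreal)
  qed
  finally show ?thesis .
qed

definition Kg :: "('n::finite) itself \<Rightarrow> real" where
  "Kg _ = enn2real (\<integral>\<^sup>+ z. ennreal (exp (norm (z::real^'n) ^ 2 / 4)) \<partial>std_gauss) + 1"

lemma Kg_ge: "(\<integral>\<^sup>+ z. ennreal (exp (norm (z::real^'n) ^ 2 / 4)) \<partial>std_gauss) \<le> ennreal (Kg TYPE('n))"
proof -
  let ?K = "(\<integral>\<^sup>+ z. ennreal (exp (norm (z::real^'n) ^ 2 / 4)) \<partial>std_gauss)"
  have "?K = ennreal (enn2real ?K)" using K_finite[where 'n='n] by simp
  also have "\<dots> \<le> ennreal (Kg TYPE('n))" unfolding Kg_def by (intro ennreal_leI) simp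
  finally show ?thesis .
qed

lemma Kg_pos: "Kg TYPE('n::finite) \<ge> 1"
  unfolding Kg_def by simp


lemma std_gauss_finite: "finite_measure (std_gauss :: (real^'n) measure)"
proof
  have "emeasure (std_gauss :: (real^'n) measure) (space std_gauss) = (\<integral>\<^sup>+ z. 1 \<partial>(std_gauss :: (real^'n) measure))"
    by simp
  also have "\<dots> \<le> (\<integral>\<^sup>+ z. ennreal (exp (norm (z::real^'n) ^ 2 / 4)) \<partial>std_gauss)"
    by (intro nn_integral_mono) simp
  also have "\<dots> < \<top>" by (rule K_finite)
  finally show "emeasure (std_gauss :: (real^'n) measure) (space std_gauss) \<noteq> \<infinity>" by simp
qed

lemma psf: "product_sigma_finite (\<lambda>_. std_gauss :: (real^'n) measure)"
  unfolding product_sigma_finite_def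
  using finite_measure.sigma_finite_measure[OF std_gauss_finite] by blast

lemma tail_bound:
  fixes c :: nat and T :: real
  assumes A: "A \<subseteq> {Zs \<in> space (iid_gauss c :: (nat \<Rightarrow> real^'n) measure). c * T \<le> (\<Sum>k<c. norm (Zs k)^2)}"
  shows "measure (iid_gauss c :: (nat \<Rightarrow> real^'n) measure) A \<le> exp (- c * T / 4) * Kg TYPE('n) ^ c"
proof (cases "A \<in> sets (iid_gauss c :: (nat \<Rightarrow> real^'n) measure)")
  case False
  then show ?thesis using Kg_pos[where 'n='n] by (simp add: measure_notin_sets)
next
  case True
  let ?M = "iid_gauss c :: (nat \<Rightarrow> real^'n) measure"
  let ?K = "(\<integral>\<^sup>+ z. ennreal (exp (norm (z::real^'n) ^ 2 / 4)) \<partial>std_gauss)"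
  define u where "u x = (\<Prod>k<c. ennreal (exp (norm ((x::nat \<Rightarrow> real^'n) k)^2 / 4)))" for x
  have "emeasure ?M A = (\<integral>\<^sup>+ x. indicator A x \<partial>?M)" using True by simp
  also have "\<dots> \<le> (\<integral>\<^sup>+ x. ennreal (exp (- c * T / 4)) * u x \<partial>?M)"
  proof (intro nn_integral_mono)
    fix x assume "x \<in> space ?M"
    show "indicator A x \<le> ennreal (exp (- c * T / 4)) * u x"
    proof (cases "x \<in> A")
      case False then show ?thesis by simp
    next
      case xA: True
      have "c * T \<le> (\<Sum>k<c. norm (x k)^2)" using A xA by auto
      then have "1 \<le> exp (- c * T / 4 + (\<Sum>k<c. norm (x k)^2 / 4))"
        by (simp add: sum_divide_distrib[symmetric])
      also have "\<dots> = exp (- c * T / 4) * (\<Prod>k<c. exp (norm (x k)^2 / 4))"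
        by (simp add: exp_add[symmetric] exp_sum[symmetric])
      finally have "ennreal 1 \<le> ennreal (exp (- c * T / 4) * (\<Prod>k<c. exp (norm (x k)^2 / 4)))"
        by (rule ennreal_leI)
      also have "\<dots> = ennreal (exp (- c * T / 4)) * u x"
        by (simp add: u_def ennreal_mult prod_nonneg prod_ennreal)
      finally show ?thesis using xA by simp
    qed
  qed
  also have "\<dots> = ennreal (exp (- c * T / 4)) * (\<integral>\<^sup>+ x. u x \<partial>?M)"
    by (rule nn_integral_cmult) (simp add: u_def iid_gauss_def)
  also have "(\<integral>\<^sup>+ x. u x \<partial>?M) = (\<Prod>k<c. ?K)"
    unfolding u_def iid_gauss_def
    by (rule product_sigma_finite.product_nn_integral_prod[OF psf]) auto
  also have "(\<Prod>k<c. ?K) \<le> (\<Prod>k<c. ennreal (Kg TYPE('n)))"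
    unfolding prod_constant by (intro power_mono Kg_ge) simp
  also have "ennreal (exp (- c * T / 4)) * (\<Prod>k<c. ennreal (Kg TYPE('n))) = ennreal (exp (- c * T / 4) * Kg TYPE('n) ^ c)"
    using Kg_pos[where 'n='n] by (simp add: ennreal_mult prod_ennreal ennreal_power)
  finally have "emeasure ?M A \<le> ennreal (exp (- c * T / 4) * Kg TYPE('n) ^ c)"
    by (simp add: mult_left_mono)
  then show ?thesis unfolding measure_def using Kg_pos[where 'n='n]
    by (intro enn2real_leI) auto
qed


theorem mainTheorem18:
  fixes G :: "real^'d \<Rightarrow> real^'e^'e"
    and C :: "nat \<Rightarrow> nat"
    and \<alpha> :: real
    and S :: "(real^'d^'d) set"
  assumes G_psd: "\<forall>z. psd (G z)"
    and C_pos: "\<forall>n. 0 < C n"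
    and alpha_pos: "0 < \<alpha>"
    and growth: "(\<lambda>n. real (C n) / real n) \<longlonglongrightarrow> \<alpha>"
    and G_cont: "continuous_on UNIV G"
    and G_qlip: "\<forall>\<epsilon>>0. \<exists>C\<epsilon>>0. \<forall>z z'. norm (G z - G z')
                   \<le> C\<epsilon> * (1 + norm (z - z') * (norm z + norm z')) + \<epsilon> * (norm z ^ 2 + norm z' ^ 2)"
    and S_compact: "compact S"
    and S_psd: "S \<subseteq> {Q. psd Q}"
  shows "\<forall>\<epsilon>>0. \<exists>R::real. \<forall>\<^sub>F n in sequentially. \<forall>Q\<in>S.
           measure (iid_gauss (C n))
             {Zs \<in> space (iid_gauss (C n)).
                norm ((1 / real (C n)) *\<^sub>R (\<Sum>k<C n. G (psd_sqrt Q *v Zs k))) > R}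
           \<le> exp (- real n * \<epsilon>)"
proof (intro allI impI)
  fix \<epsilon> :: real assume eps: "\<epsilon> > 0"
  obtain K1 where K1: "K1 > 0" and bnd: "\<And>z z'. norm (G z - G z')
      \<le> K1 * (1 + norm (z - z') * (norm z + norm z')) + 1 * (norm z ^ 2 + norm z' ^ 2)"
    using G_qlip zero_less_one by blast
  have Gb: "norm (G z) \<le> (norm (G 0) + K1) + (K1 + 1) * norm z ^ 2" for z
  proof -
    have "norm (G z - G 0) \<le> K1 * (1 + norm z * norm z) + norm z ^ 2" using bnd[of z 0] by simp
    moreover have "norm (G z) \<le> norm (G z - G 0) + norm (G 0)" using norm_triangle_ineq2[of "G z" "G 0"] by simp
    ultimately show ?thesis by (simp add: power2_eq_square algebra_simps)
  qed
  obtain Mq where Mq: "\<And>Q. Q \<in> S \<Longrightarrow> norm Q \<le> Mq"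
    using compact_imp_bounded[OF S_compact] unfolding bounded_iff by blast
  define Mq' where "Mq' = max Mq 0"
  define D where "D = real CARD('d) * real CARD('d)"
  have D0: "D \<ge> 0" by (simp add: D_def)
  have sq: "norm (psd_sqrt Q *v z) ^ 2 \<le> (D * Mq') * norm z ^ 2" if Q: "Q \<in> S" for Q z
  proof -
    define B where "B = psd_sqrt Q"
    have pQ: "psd Q" using Q S_psd by auto
    have pB: "psd B" and BB: "B ** B = Q" using psd_sqrt_props[OF pQ] by (auto simp: B_def)
    have sB: "transpose B = B" using pB by (simp add: psd_def)
    have "norm (B *v z) ^ 2 = (B *v z) \<bullet> (B *v z)" by (simp add: power2_norm_eq_inner)
    also have "\<dots> = z \<bullet> (B *v (B *v z))" using sym_inner[OF sB, of z "B *v z"] by simp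
    also have "\<dots> = z \<bullet> (Q *v z)" by (simp add: matrix_vector_mul_assoc BB)
    also have "\<dots> \<le> norm z * norm (Q *v z)" by (rule norm_cauchy_schwarz)
    also have "norm (Q *v z) \<le> onorm ((*v) Q) * norm z"
      by (rule onorm[OF matrix_vector_mul_bounded_linear])
    also have "onorm ((*v) Q) \<le> D * norm Q"
    proof -
      have "\<bar>Q $ i $ j\<bar> \<le> norm Q" for i j
        using component_le_norm_cart[of "Q $ i" j] Finite_Cartesian_Product.norm_nth_le[of Q i] by linarith
      then show ?thesis unfolding D_def by (rule onorm_le_matrix_component)
    qed
    also have "norm Q \<le> Mq'" using Mq[OF Q] by (simp add: Mq'_def)
    finally show ?thesis
      by (simp add: B_def power2_eq_square mult_left_mono mult_right_mono D0 algebra_simps)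
  qed
  define a where "a = norm (G 0) + K1"
  define b where "b = (K1 + 1) * (D * Mq' + 1)"
  have Mq0: "Mq' \<ge> 0" by (simp add: Mq'_def)
  have b0: "b > 0" unfolding b_def using K1 D0 Mq0 by (intro mult_pos_pos add_pos_nonneg add_nonneg_pos) auto
  have GQ: "norm (G (psd_sqrt Q *v z)) \<le> a + b * norm z ^ 2" if Q: "Q \<in> S" for Q z
  proof -
    have "norm (G (psd_sqrt Q *v z)) \<le> a + (K1 + 1) * norm (psd_sqrt Q *v z) ^ 2"
      using Gb unfolding a_def by blast
    also have "(K1 + 1) * norm (psd_sqrt Q *v z) ^ 2 \<le> (K1 + 1) * ((D * Mq') * norm z ^ 2)"
      using sq[OF Q] K1 by (intro mult_left_mono) auto
    also have "\<dots> \<le> b * norm z ^ 2"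
    proof -
      have "D * Mq' * norm z ^ 2 \<le> (D * Mq' + 1) * norm z ^ 2" by (simp add: algebra_simps)
      then have "(K1 + 1) * (D * Mq' * norm z ^ 2) \<le> (K1 + 1) * ((D * Mq' + 1) * norm z ^ 2)"
        using K1 by (intro mult_left_mono) auto
      then show ?thesis by (simp add: b_def mult.assoc)
    qed
    finally show ?thesis by simp
  qed
  define Kr where "Kr = Kg TYPE('d)"
  have Kr1: "Kr \<ge> 1" unfolding Kr_def by (rule Kg_pos)
  define T where "T = 4 * (ln Kr + 2 * \<epsilon> / \<alpha>)"
  show "\<exists>R::real. \<forall>\<^sub>F n in sequentially. \<forall>Q\<in>S.
           measure (iid_gauss (C n))
             {Zs \<in> space (iid_gauss (C n)).
                norm ((1 / real (C n)) *\<^sub>R (\<Sum>k<C n. G (psd_sqrt Q *v Zs k))) > R}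
           \<le> exp (- real n * \<epsilon>)"
  proof (intro exI[of _ "a + b * T"])
    have ev1: "\<forall>\<^sub>F n in sequentially. \<alpha> / 2 < real (C n) / real n"
      using order_tendstoD(1)[OF growth, of "\<alpha> / 2"] alpha_pos by linarith
    show "\<forall>\<^sub>F n in sequentially. \<forall>Q\<in>S.
           measure (iid_gauss (C n))
             {Zs \<in> space (iid_gauss (C n)).
                norm ((1 / real (C n)) *\<^sub>R (\<Sum>k<C n. G (psd_sqrt Q *v Zs k))) > a + b * T}
           \<le> exp (- real n * \<epsilon>)"
      using ev1 eventually_ge_at_top[of 1]
    proof eventually_elim
      case (elim n)
      define c where "c = C n"
      have c0: "c > 0" using C_pos by (simp add: c_def)
      have cn: "real c \<ge> \<alpha> * real n / 2" using elim by (simp add: c_def field_simps)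
      show ?case
      proof
        fix Q assume Q: "Q \<in> S"
        let ?M = "iid_gauss c :: (nat \<Rightarrow> real^'d) measure"
        let ?A = "{Zs \<in> space ?M. norm ((1 / real c) *\<^sub>R (\<Sum>k<c. G (psd_sqrt Q *v Zs k))) > a + b * T}"
        have sub: "?A \<subseteq> {Zs \<in> space ?M. c * T \<le> (\<Sum>k<c. norm (Zs k)^2)}"
        proof safe
          fix Zs assume Zs: "Zs \<in> space ?M"
            and gt: "a + b * T < norm ((1 / real c) *\<^sub>R (\<Sum>k<c. G (psd_sqrt Q *v Zs k)))"
          have "norm ((1 / real c) *\<^sub>R (\<Sum>k<c. G (psd_sqrt Q *v Zs k)))
              = (1 / real c) * norm (\<Sum>k<c. G (psd_sqrt Q *v Zs k))" by simp
          also have "\<dots> \<le> (1 / real c) * (\<Sum>k<c. norm (G (psd_sqrt Q *v Zs k)))"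
            by (intro mult_left_mono norm_sum) simp
          also have "\<dots> \<le> (1 / real c) * (\<Sum>k<c. a + b * norm (Zs k) ^ 2)"
            by (intro mult_left_mono sum_mono GQ[OF Q]) simp
          also have "\<dots> = a + b * ((\<Sum>k<c. norm (Zs k) ^ 2) / real c)"
            using c0 by (simp add: sum.distrib sum_distrib_left[symmetric] field_simps)
          finally have "b * T < b * ((\<Sum>k<c. norm (Zs k) ^ 2) / real c)" using gt by simp
          then have "T < (\<Sum>k<c. norm (Zs k) ^ 2) / real c" using b0 mult_less_cancel_left_pos by blast
          then show "real c * T \<le> (\<Sum>k<c. norm (Zs k) ^ 2)" using c0 by (simp add: field_simps)
        qed
        have "measure ?M ?A \<le> exp (- c * T / 4) * Kr ^ c"
          unfolding Kr_def by (rule tail_bound[OF sub])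
        also have "Kr ^ c = exp (c * ln Kr)" using Kr1 by (simp add: exp_of_nat_mult)
        also have "exp (- c * T / 4) * exp (c * ln Kr) = exp (- (c * (2 * \<epsilon> / \<alpha>)))"
        proof -
          have "- c * T / 4 + c * ln Kr = - (c * (2 * \<epsilon> / \<alpha>))"
            using alpha_pos by (simp add: T_def field_simps)
          then show ?thesis by (simp add: exp_add[symmetric])
        qed
        also have "\<dots> \<le> exp (- real n * \<epsilon>)"
        proof -
          have "real n * \<epsilon> \<le> c * (2 * \<epsilon> / \<alpha>)"
          proof -
            have "c * (2 * \<epsilon> / \<alpha>) \<ge> (\<alpha> * real n / 2) * (2 * \<epsilon> / \<alpha>)"
              using cn eps alpha_pos by (intro mult_right_mono) auto
            also have "(\<alpha> * real n / 2) * (2 * \<epsilon> / \<alpha>) = real n * \<epsilon>" using alpha_pos by simp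
            finally show ?thesis .
          qed
          then show ?thesis by simp
        qed
        finally show "measure (iid_gauss (C n))
             {Zs \<in> space (iid_gauss (C n)).
                norm ((1 / real (C n)) *\<^sub>R (\<Sum>k<C n. G (psd_sqrt Q *v Zs k))) > a + b * T}
           \<le> exp (- real n * \<epsilon>)" by (simp add: c_def)
      qed
    qed
  qed
qed

end
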